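(* Let $N\ge 2$ be an integer and $\tau>0$. For $t\in\{0,\tau,2\tau,\dots\}$ let $u_j^t=u(j,t)$, $j=0,\dots,N$, be defined by prescribed initial values $u(j,0)$, the Dirichlet boundary condition $u_0^t=u_N^t=0$ for all $t$ (in particular $u(0,0)=u(N,0)=0$), and the iteration, for $j=1,\dots,N-1$, $$u_j^{t+\tau}=u_j^t+\frac{u_j^tu_{j-1}^t}{2}\bigl(u_j^t+u_{j-1}^t-1\bigr)\bigl(u_{j-1}^t-u_j^t\bigr)+\frac{u_j^tu_{j+1}^t}{2}\bigl(u_j^t+u_{j+1}^t-1\bigr)\bigl(u_{j+1}^t-u_j^t\bigr).$$ Suppose $1/2\le u(j,0)\le 1$ for $j=1,\dots,N-1$. Then for every $j=1,\dots,N-1$, $$\lim_{t\to\infty}u(j,t)=\frac{1}{N-1}\sum_{i=1}^{N-1}u(i,0).$$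
   Context: Aggregation–diffusion lattice model on the grid points $x_j=j/N$ with time step $\tau$; the limit is taken along $t\in\{0,\tau,2\tau,\dots\}$. *)

theory Defs
  imports Complex_Main
begin

definition lattice_step :: "(nat \<Rightarrow> real) \<Rightarrow> nat \<Rightarrow> real" where
  "lattice_step v j =
     v j
     + v j * v (j - 1) / 2 * (v j + v (j - 1) - 1) * (v (j - 1) - v j)
     + v j * v (j + 1) / 2 * (v j + v (j + 1) - 1) * (v (j + 1) - v j)"

end

theory Submission
  imports Defs
begin


definition flux :: "(nat \<Rightarrow> real) \<Rightarrow> nat \<Rightarrow> real" where
  "flux v j = v j * v (j+1) / 2 * (v j + v (j+1) - 1) * (v (j+1) - v j)"

lemma step_flux: "1 \<le> j \<Longrightarrow> lattice_step v j = v j + flux v j - flux v (j-1)"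
proof -
  assume "1 \<le> j"
  then obtain i where j: "j = Suc i" by (cases j) auto
  show ?thesis unfolding lattice_step_def flux_def j by (simp add: field_simps)
qed

lemma D_bounds:
  fixes a b :: real
  assumes "1/2 \<le> a" "a \<le> 1" "1/2 \<le> b" "b \<le> 1"
  shows "0 \<le> a*b/2*(a+b-1)" "a*b/2*(a+b-1) \<le> 1/2"
proof -
  have ab: "0 \<le> a*b" "a*b \<le> 1" using assms by (auto intro: mult_le_one)
  have s: "0 \<le> a+b-1" "a+b-1 \<le> 1" using assms by auto
  show "0 \<le> a*b/2*(a+b-1)" using ab s by simp
  have "a*b*(a+b-1) \<le> 1" using ab s by (auto intro: mult_le_one)
  then show "a*b/2*(a+b-1) \<le> 1/2" by simp
qed

lemma conv_bounds:
  fixes b x y Dl Dr a c :: real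
  assumes b: "1/2 \<le> b" "b \<le> 1"
    and Dl: "0 \<le> Dl" "Dl \<le> 1/2" and Dr: "0 \<le> Dr" "Dr \<le> 1/2"
    and a: "Dl = 0 \<or> (1/2 \<le> a \<and> a \<le> 1)"
    and c: "Dr = 0 \<or> (1/2 \<le> c \<and> c \<le> 1)"
  shows "1/2 \<le> b + Dl*(a-b) + Dr*(c-b) \<and> b + Dl*(a-b) + Dr*(c-b) \<le> 1"
proof -
  have e: "b + Dl*(a-b) + Dr*(c-b) = (1-Dl-Dr)*b + Dl*a + Dr*c" by (simp add: algebra_simps)
  have w: "0 \<le> 1-Dl-Dr" using Dl Dr by simp
  have t1: "(1-Dl-Dr)*(1/2) \<le> (1-Dl-Dr)*b \<and> (1-Dl-Dr)*b \<le> (1-Dl-Dr)*1"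
    using mult_left_mono[OF b(1) w] mult_left_mono[OF b(2) w] by blast
  have t2: "Dl*(1/2) \<le> Dl*a \<and> Dl*a \<le> Dl*1"
  proof (cases "Dl = 0")
    case False
    then have "1/2 \<le> a" "a \<le> 1" using a by auto
    then show ?thesis using mult_left_mono[of "1/2" a Dl] mult_left_mono[of a 1 Dl] Dl by simp
  qed simp
  have t3: "Dr*(1/2) \<le> Dr*c \<and> Dr*c \<le> Dr*1"
  proof (cases "Dr = 0")
    case False
    then have "1/2 \<le> c" "c \<le> 1" using c by auto
    then show ?thesis using mult_left_mono[of "1/2" c Dr] mult_left_mono[of c 1 Dr] Dr by simp
  qed simp
  define P where "P = (1-Dl-Dr)*b"
  define Q where "Q = Dl*a"
  define R where "R = Dr*c"
  have "1/2 \<le> P + Q + R \<and> P + Q + R \<le> 1"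
    using t1 t2 t3 unfolding P_def[symmetric] Q_def[symmetric] R_def[symmetric] by (simp add: ring_distribs; linarith)
  then show ?thesis unfolding e P_def Q_def R_def .
qed

lemma pair_bound:
  fixes a b :: real
  assumes "1/2 \<le> a" "a \<le> 1" "1/2 \<le> b" "b \<le> 1"
  shows "(b-a)^4/4 \<le> 2*(b-a)*(a*b/2*(a+b-1)*(b-a)) - 4*(a*b/2*(a+b-1)*(b-a))^2"
proof -
  define D where "D = a*b/2*(a+b-1)"
  define d where "d = \<bar>b-a\<bar>"
  have ab: "1/4 \<le> a*b" using assms mult_mono[of "1/2" a "1/2" b] by simp
  have s: "d \<le> a+b-1" using assms unfolding d_def by auto
  have d0: "0 \<le> d" unfolding d_def by simp
  have D1: "d/4 \<le> 2*D"
  proof -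
    have "(1/4)*d \<le> (a*b)*(a+b-1)" using mult_mono[OF ab s] d0 ab by simp
    then show ?thesis unfolding D_def by simp
  qed
  have m: "min a b \<le> 1 - d" using assms unfolding d_def by auto
  have D2: "2*D \<le> 1 - d"
  proof -
    have "a*b \<le> min a b" using assms by (auto simp: min_def intro: mult_le_one mult_left_le mult_right_le_one_le)
    moreover have "a+b-1 \<le> min a b" using assms by auto
    moreover have "0 \<le> a+b-1" using assms by auto
    ultimately have "a*b*(a+b-1) \<le> min a b * min a b"
      using assms by (intro mult_mono) auto
    also have "\<dots> \<le> min a b" using assms mult_left_le[of "min a b" "min a b"] by auto
    finally have "a*b*(a+b-1) \<le> min a b" .
    moreover have "2*D = a*b*(a+b-1)" unfolding D_def by simp
    ultimately show ?thesis using m by linarith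
  qed
  have "(d/4)*d \<le> (2*D)*(1-2*D)" using D1 D2 d0 by (intro mult_mono) auto
  then have "d^2 * ((d/4)*d) \<le> d^2 * ((2*D)*(1-2*D))" by (intro mult_left_mono) auto
  moreover have "(b-a)^2 = d^2" unfolding d_def by simp
  moreover have "(b-a)^4 = d^2*d^2" unfolding d_def by (simp add: power4_eq_xxxx power2_eq_square mult.assoc)
  ultimately have "(b-a)^4/4 \<le> (b-a)^2 * ((2*D)*(1-2*D))"
    by (simp add: power2_eq_square)
  also have "\<dots> = 2*(b-a)*(D*(b-a)) - 4*(D*(b-a))^2" by (simp add: power2_eq_square algebra_simps)
  finally show ?thesis unfolding D_def .
qed


lemma telescope: fixes n :: nat shows "(\<Sum>j=1..n. f j - f (j-1)) = f n - (f 0 :: real)"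
  by (induction n) auto

lemma energy:
  fixes v v' F :: "nat \<Rightarrow> real" and M :: nat
  assumes v0: "v 0 = 0" and vM: "v (Suc M) = 0"
    and upd: "\<And>j. 1 \<le> j \<Longrightarrow> j \<le> M \<Longrightarrow> v' j = v j + F j - F (j-1)"
  shows "(\<Sum>j=1..M. (v' j)^2) \<le> (\<Sum>j=1..M. (v j)^2)
           - (\<Sum>j=0..M. 2*(v (j+1) - v j)*F j - 4*(F j)^2)"
proof -
  have pt: "(v' j)^2 \<le> (v j)^2 + 2*(v j * F j) - 2*(v j * F (j-1)) + 2*(F j)^2 + 2*(F (j-1))^2"
    if "j \<in> {1..M}" for j
  proof -
    have "(v' j)^2 = (v j)^2 + 2*(v j * F j) - 2*(v j * F (j-1)) + (F j - F (j-1))^2"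
    proof -
      have e: "v' j = v j + F j - F (j-1)" using upd that by auto
      show ?thesis unfolding e by (simp add: power2_eq_square algebra_simps)
    qed
    moreover have "(F j - F (j-1))^2 \<le> 2*(F j)^2 + 2*(F (j-1))^2"
      using sum_squares_ge_zero[of "F j + F (j-1)" 0]
      by (simp add: power2_eq_square algebra_simps)
    ultimately show ?thesis by linarith
  qed
  have A: "(\<Sum>j=0..M. v j * F j) = (\<Sum>j=1..M. v j * F j)"
    using sum.atLeast_Suc_atMost[of 0 M "\<lambda>j. v j * F j"] v0 by simp
  have B: "(\<Sum>j=0..M. v (j+1) * F j) = (\<Sum>j=1..M. v j * F (j-1))"
  proof -
    have "(\<Sum>j=0..M. v (j+1) * F j) = (\<Sum>j=Suc 0..Suc M. v j * F (j-1))"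
      using sum.shift_bounds_cl_Suc_ivl[of "\<lambda>j. v j * F (j-1)" 0 M] by simp
    also have "\<dots> = (\<Sum>j=1..M. v j * F (j-1))" using vM by simp
    finally show ?thesis .
  qed
  have C1: "(\<Sum>j=1..M. (F j)^2) \<le> (\<Sum>j=0..M. (F j)^2)"
    by (rule sum_mono2) auto
  have C2: "(\<Sum>j=1..M. (F (j-1))^2) \<le> (\<Sum>j=0..M. (F j)^2)"
  proof -
    have "(\<Sum>j=1..M. (F (j-1))^2) \<le> (\<Sum>j=Suc 0..Suc M. (F (j-1))^2)"
      by (rule sum_mono2) auto
    also have "\<dots> = (\<Sum>j=0..M. (F j)^2)"
      using sum.shift_bounds_cl_Suc_ivl[of "\<lambda>j. (F (j-1))^2" 0 M] by simp
    finally show ?thesis .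
  qed
  have "(\<Sum>j=1..M. (v' j)^2) \<le> (\<Sum>j=1..M. (v j)^2 + 2*(v j * F j) - 2*(v j * F (j-1)) + 2*(F j)^2 + 2*(F (j-1))^2)"
    by (rule sum_mono) (rule pt)
  also have "\<dots> = (\<Sum>j=1..M. (v j)^2) + 2*(\<Sum>j=1..M. v j * F j) - 2*(\<Sum>j=1..M. v j * F (j-1))
      + 2*(\<Sum>j=1..M. (F j)^2) + 2*(\<Sum>j=1..M. (F (j-1))^2)"
    by (simp add: sum.distrib sum_subtractf sum_distrib_left)
  also have "\<dots> \<le> (\<Sum>j=1..M. (v j)^2) + 2*(\<Sum>j=0..M. v j * F j) - 2*(\<Sum>j=0..M. v (j+1) * F j)
      + 4*(\<Sum>j=0..M. (F j)^2)"
    using A B C1 C2 by linarith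
  also have "\<dots> = (\<Sum>j=1..M. (v j)^2) - (\<Sum>j=0..M. 2*(v (j+1) - v j)*F j - 4*(F j)^2)"
    by (simp add: sum.distrib sum_subtractf sum_distrib_left algebra_simps)
  finally show ?thesis .
qed


lemma main:
  fixes w :: "nat \<Rightarrow> nat \<Rightarrow> real" and M :: nat
  assumes M: "M \<ge> 1" and b0: "\<And>k. w k 0 = 0" and bN: "\<And>k. w k (Suc M) = 0"
    and st: "\<And>k j. 1 \<le> j \<Longrightarrow> j \<le> M \<Longrightarrow> w (Suc k) j = w k j + flux (w k) j - flux (w k) (j-1)"
    and init: "\<And>j. 1 \<le> j \<Longrightarrow> j \<le> M \<Longrightarrow> 1/2 \<le> w 0 j \<and> w 0 j \<le> 1"
    and j: "1 \<le> j" "j \<le> M"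
  shows "(\<lambda>k. w k j) \<longlonglongrightarrow> (\<Sum>i=1..M. w 0 i) / real M"
proof -
  have inv: "1/2 \<le> w k i \<and> w k i \<le> 1" if "1 \<le> i" "i \<le> M" for k i
    using that
  proof (induction k arbitrary: i)
    case 0 then show ?case using init by auto
  next
    case (Suc k)
    define a where "a = w k (i-1)"
    define b where "b = w k i"
    define c where "c = w k (i+1)"
    define Dl where "Dl = a*b/2*(a+b-1)"
    define Dr where "Dr = b*c/2*(b+c-1)"
    have bb: "1/2 \<le> b" "b \<le> 1" using Suc b_def by auto
    have L: "0 \<le> Dl \<and> Dl \<le> 1/2 \<and> (Dl = 0 \<or> (1/2 \<le> a \<and> a \<le> 1))"
    proof (cases "i = 1")
      case True
      then have "a = 0" unfolding a_def using b0 by simp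
      then show ?thesis unfolding Dl_def by simp
    next
      case False
      then have "1/2 \<le> a \<and> a \<le> 1" unfolding a_def using Suc by auto
      then show ?thesis using D_bounds[of a b] bb unfolding Dl_def by auto
    qed
    have R: "0 \<le> Dr \<and> Dr \<le> 1/2 \<and> (Dr = 0 \<or> (1/2 \<le> c \<and> c \<le> 1))"
    proof (cases "i = M")
      case True
      then have "c = 0" unfolding c_def using bN by simp
      then show ?thesis unfolding Dr_def by simp
    next
      case False
      then have "1/2 \<le> c \<and> c \<le> 1" unfolding c_def using Suc by auto
      then show ?thesis using D_bounds[of b c] bb unfolding Dr_def by auto
    qed
    have e: "w (Suc k) i = b + Dl*(a-b) + Dr*(c-b)"
    proof -
      have "i - 1 + 1 = i" using Suc by simp
      then have "flux (w k) (i-1) = Dl*(b-a)" unfolding flux_def Dl_def a_def b_def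
        by (simp add: algebra_simps)
      moreover have "flux (w k) i = Dr*(c-b)" unfolding flux_def Dr_def c_def b_def by simp
      ultimately show ?thesis using st[of i k] Suc unfolding b_def by (simp add: algebra_simps)
    qed
    show ?case unfolding e using conv_bounds[of b Dl Dr a c] bb L R by blast
  qed
  define S where "S k = (\<Sum>i=1..M. w k i)" for k
  have fl0: "flux (w k) 0 = 0" for k unfolding flux_def using b0 by simp
  have flM: "flux (w k) M = 0" for k unfolding flux_def using bN by simp
  have cons: "S k = S 0" for k
  proof (induction k)
    case (Suc k)
    have "S (Suc k) = (\<Sum>i=1..M. w k i + (flux (w k) i - flux (w k) (i-1)))"
      unfolding S_def by (rule sum.cong) (auto simp: st)
    also have "\<dots> = S k + (flux (w k) M - flux (w k) 0)"
      unfolding S_def sum.distrib telescope ..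
    finally show ?case using Suc fl0 flM by simp
  qed simp
  define E where "E k = (\<Sum>i=1..M. (w k i)^2)" for k
  define T where "T k i = 2*(w k (i+1) - w k i)*flux (w k) i - 4*(flux (w k) i)^2" for k i
  have Tb: "(w k (i+1) - w k i)^4/4 \<le> T k i" if "1 \<le> i" "i < M" for k i
    using pair_bound[of "w k i" "w k (i+1)"] inv[of i k] inv[of "i+1" k] that
    unfolding T_def flux_def by auto
  have T0: "0 \<le> T k i" if iM: "i \<le> M" for k i
  proof -
    consider "i = 0" | "i = M" | "1 \<le> i \<and> i < M" using iM by (cases "i = 0"; cases "i = M") auto
    then show ?thesis
    proof cases
      case 1 then show ?thesis unfolding T_def using fl0 by simp
    next
      case 2 then show ?thesis unfolding T_def using flM by simp
    next
      case 3
      then have "(w k (i+1) - w k i)^4/4 \<le> T k i" using Tb[of i k] by blast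
      moreover have "0 \<le> (w k (i+1) - w k i)^4/4" by simp
      ultimately show ?thesis by linarith
    qed
  qed
  have Edec: "E (Suc k) \<le> E k - (\<Sum>i=0..M. T k i)" for k
    unfolding E_def T_def
    by (rule energy[of "w k" M "w (Suc k)" "flux (w k)"]) (auto simp: b0 bN st)
  have Tsum: "T k i \<le> (\<Sum>i=0..M. T k i)" if "i \<le> M" for k i
    by (rule member_le_sum) (use that T0 in auto)
  have decE: "decseq E"
  proof (rule decseq_SucI)
    fix k
    have "0 \<le> (\<Sum>i=0..M. T k i)" by (rule sum_nonneg) (use T0 in auto)
    then show "E (Suc k) \<le> E k" using Edec[of k] by linarith
  qed
  have E0: "\<forall>k. 0 \<le> E k" unfolding E_def by (auto intro: sum_nonneg)
  obtain L where EL: "E \<longlonglongrightarrow> L" using decseq_convergent[OF decE E0] by blast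
  have Ediff: "(\<lambda>k. E k - E (Suc k)) \<longlonglongrightarrow> 0"
    using tendsto_diff[OF EL LIMSEQ_Suc[OF EL]] by simp
  have Dlim: "(\<lambda>k. w k (i+1) - w k i) \<longlonglongrightarrow> 0" if "1 \<le> i" "i < M" for i
  proof -
    have up: "(w k (i+1) - w k i)^4/4 \<le> E k - E (Suc k)" for k
      using Tb[OF that, of k] Tsum[of i k] Edec[of k] that by linarith
    have "(\<lambda>k. (w k (i+1) - w k i)^4/4) \<longlonglongrightarrow> 0"
      by (rule tendsto_sandwich[of "\<lambda>_. 0" _ _ "\<lambda>k. E k - E (Suc k)"])
         (use up Ediff in auto)
    then have "(\<lambda>k. (w k (i+1) - w k i)^4) \<longlonglongrightarrow> 0"
      using tendsto_mult_right_zero[of _ sequentially 4] by simp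
    then have "(\<lambda>k. root 4 ((w k (i+1) - w k i)^4)) \<longlonglongrightarrow> root 4 0"
      by (intro tendsto_real_root)
    moreover have "root 4 ((x::real)^4) = \<bar>x\<bar>" for x
    proof -
      have "x^4 = \<bar>x\<bar>^4" by (simp add: power_abs)
      then show ?thesis using real_root_power_cancel[of 4 "\<bar>x\<bar>"] by simp
    qed
    ultimately have "(\<lambda>k. \<bar>w k (i+1) - w k i\<bar>) \<longlonglongrightarrow> 0" by simp
    then show ?thesis by (simp add: tendsto_rabs_zero_iff)
  qed
  have Plim: "(\<lambda>k. w k (i+d) - w k i) \<longlonglongrightarrow> 0" if "1 \<le> i" "i + d \<le> M" for i d
    using that
  proof (induction d)
    case 0 then show ?case by simp
  next
    case (Suc d)
    have "(\<lambda>k. (w k (i+d+1) - w k (i+d)) + (w k (i+d) - w k i)) \<longlonglongrightarrow> 0 + 0"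
      using Dlim[of "i+d"] Suc by (intro tendsto_add) auto
    then show ?case by simp
  qed
  have Plim2: "(\<lambda>k. w k j - w k i) \<longlonglongrightarrow> 0" if "1 \<le> i" "i \<le> M" for i
  proof (cases "i \<le> j")
    case True
    then show ?thesis using Plim[of i "j-i"] that j by simp
  next
    case False
    then have "(\<lambda>k. -(w k i - w k j)) \<longlonglongrightarrow> -0"
      using Plim[of j "i-j"] that j by (intro tendsto_minus) simp
    then show ?thesis by simp
  qed
  have "(\<lambda>k. (\<Sum>i=1..M. w k j - w k i) / real M) \<longlonglongrightarrow> (\<Sum>i=1..M. 0) / real M"
    by (intro tendsto_divide tendsto_sum Plim2) (use M in auto)
  moreover have "(\<Sum>i=1..M. w k j - w k i) / real M = w k j - S 0 / real M" for k
  proof -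
    have "(\<Sum>i=1..M. w k j - w k i) = real M * w k j - S k"
      unfolding S_def by (simp add: sum_subtractf)
    then show ?thesis using cons[of k] M by (simp add: field_simps)
  qed
  ultimately have "(\<lambda>k. w k j - S 0 / real M) \<longlonglongrightarrow> 0" by simp
  then show ?thesis unfolding S_def by (simp add: LIM_zero_iff)
qed


theorem theorem3p5:
  fixes N :: nat and \<tau> :: real and u :: "nat \<Rightarrow> real \<Rightarrow> real"
  assumes N: "N \<ge> 2"
    and tau: "\<tau> > 0"
    and bdry0: "\<And>k::nat. u 0 (real k * \<tau>) = 0"
    and bdryN: "\<And>k::nat. u N (real k * \<tau>) = 0"
    and iter: "\<And>(k::nat) j. 1 \<le> j \<Longrightarrow> j \<le> N - 1 \<Longrightarrow>
         u j (real k * \<tau> + \<tau>) = lattice_step (\<lambda>i. u i (real k * \<tau>)) j"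
    and init: "\<And>j. 1 \<le> j \<Longrightarrow> j \<le> N - 1 \<Longrightarrow> 1/2 \<le> u j 0 \<and> u j 0 \<le> 1"
  shows "\<forall>j. 1 \<le> j \<and> j \<le> N - 1 \<longrightarrow>
     (\<lambda>k::nat. u j (real k * \<tau>)) \<longlonglongrightarrow> (\<Sum>i=1..N-1. u i 0) / real (N - 1)"
proof (intro allI impI)
  fix j assume j: "1 \<le> j \<and> j \<le> N - 1"
  define M where "M = N - 1"
  have NM: "N = Suc M" "M \<ge> 1" using N unfolding M_def by auto
  define w where "w k i = u i (real k * \<tau>)" for k i
  have "(\<lambda>k. w k j) \<longlonglongrightarrow> (\<Sum>i=1..M. w 0 i) / real M"
  proof (rule main)
    show "1 \<le> M" by (rule NM(2))
    show "w k 0 = 0" for k unfolding w_def by (rule bdry0)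
    show "w k (Suc M) = 0" for k unfolding w_def NM(1)[symmetric] by (rule bdryN)
    show "w (Suc k) i = w k i + flux (w k) i - flux (w k) (i-1)" if "1 \<le> i" "i \<le> M" for k i
    proof -
      have "w (Suc k) i = u i (real k * \<tau> + \<tau>)" unfolding w_def by (simp add: distrib_right add.commute)
      also have "\<dots> = lattice_step (w k) i" using iter[of i k] that unfolding w_def M_def by simp
      also have "\<dots> = w k i + flux (w k) i - flux (w k) (i-1)" using step_flux that by simp
      finally show ?thesis .
    qed
    show "1/2 \<le> w 0 i \<and> w 0 i \<le> 1" if "1 \<le> i" "i \<le> M" for i
      using init[of i] that unfolding w_def M_def by simp
    show "1 \<le> j" "j \<le> M" using j unfolding M_def by auto
  qed
  then show "(\<lambda>k::nat. u j (real k * \<tau>)) \<longlonglongrightarrow> (\<Sum>i=1..N-1. u i 0) / real (N - 1)"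
    unfolding w_def M_def by simp
qed

end
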